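(* Let $F:(M_1,g_1)\to(M_2,g_2)$ be a Riemannian submersion with $\dim M_1=n$, $\dim M_2=m$ and fibre dimension $r=\dim\mathcal V_p>2$, and let $p\in M_1$. Then $$\hat\delta^{\mathcal V}(2)(p)\;\ge\;\tau^{M_1}_{\mathcal V}(p)-\sup\{K^{M_1}_{\mathcal V}(\Pi):\Pi\subset\mathcal V_p,\ \dim\Pi=2\}-\frac{r^2(r-2)}{2(r-1)}\|H\|^2 .$$
   Context: Let $(M_1,g_1)$, $(M_2,g_2)$ be Riemannian manifolds, $\dim M_1=n$, $\dim M_2=m$, and $F:M_1\to M_2$ a Riemannian submersion (a surjective smooth map whose differential $F_{*p}$ is surjective at every $p$ and preserves the length of horizontal vectors). Write $\mathcal V=\ker F_*$ (vertical distribution), $\mathcal H=(\ker F_* )^\perp$ (horizontal distribution), $r=\dim\mathcal V_p=n-m$, $s=\dim\mathcal H_p=m$; $v,h$ denote the orthogonal projections onto $\mathcal V,\mathcal H$, and $\nabla$ the Levi-Civita connection of $g_1$. O'Neill's tensor: $\mathcal T_EF=h\nabla_{vE}vF+v\nabla_{vE}hF$. Curvature convention: $R^{M_1}(X,Y,Z,W)=g_1(R^{M_1}(X,Y)Z,W)$, normalized so that $R^{M_1}(X,Y,Y,X)$ is the sectional curvature of the plane spanned by orthonormal $X,Y$. The curvature $R^{\ker F_*}$ of the fibres is related to $R^{M_1}$ (as used in the paper) by: for vertical $F_1,\dots,F_4$, $R^{M_1}(F_1,F_2,F_3,F_4)=R^{\ker F_*}(F_1,F_2,F_3,F_4)+g_1(\mathcal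 T_{F_1}F_4,\mathcal T_{F_2}F_3)-g_1(\mathcal T_{F_2}F_4,\mathcal T_{F_1}F_3)$. For an orthonormal basis $\{V_1,\dots,V_r\}$ of $\mathcal V_p$: $H=\frac1r\sum_{i=1}^r\mathcal T_{V_i}V_i$ (mean curvature vector of the fibres); $\tau^{\ker F_*}_{\mathcal V}(p)=\frac12\sum_{i,j=1}^rR^{\ker F_*}(V_i,V_j,V_j,V_i)$, $\tau^{M_1}_{\mathcal V}(p)=\frac12\sum_{i,j=1}^rR^{M_1}(V_i,V_j,V_j,V_i)$. For a $2$-plane $\Pi\subset\mathcal V_p$ with orthonormal basis $\{V_1,V_2\}$: $K^{\ker F_*}_{\mathcal V}(\Pi)=R^{\ker F_*}(V_1,V_2,V_2,V_1)$, $K^{M_1}_{\mathcal V}(\Pi)=R^{M_1}(V_1,V_2,V_2,V_1)$. Finally $\hat\delta^{\mathcal V}(2)(p)=\tau^{\ker F_*}_{\mathcal V}(p)-\sup\{K^{\ker F_*}_{\mathcal V}(\Pi):\Pi\subset\mathcal V_p,\ \dim\Pi=2\}$. *)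

theory Defs
  imports "HOL-Analysis.Analysis"
begin

text \<open>Pointwise (tensor-algebraic) model of a Riemannian submersion at a point p.
  The tangent space T_p M1 is modelled by a Euclidean space 'a (inner product = g1 at p),
  the vertical space V_p by a linear subspace Vp, the horizontal space is its orthogonal
  complement.  O'Neill's tensor T (restricted to the point p) is a bilinear map, and
  the curvature R^{M1} at p is a 4-linear form with the algebraic curvature symmetries.\<close>

definition quadrilinear :: "('a::real_vector \<Rightarrow> 'a \<Rightarrow> 'a \<Rightarrow> 'a \<Rightarrow> real) \<Rightarrow> bool" where
  "quadrilinear R \<longleftrightarrow>
     (\<forall>y z w. linear (\<lambda>x. R x y z w)) \<and> (\<forall>x z w. linear (\<lambda>y. R x y z w)) \<and>
     (\<forall>x y w. linear (\<lambda>z. R x y z w)) \<and> (\<forall>x y z. linear (\<lambda>w. R x y z w))"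

definition curvature_like :: "('a::real_vector \<Rightarrow> 'a \<Rightarrow> 'a \<Rightarrow> 'a \<Rightarrow> real) \<Rightarrow> bool" where
  "curvature_like R \<longleftrightarrow> quadrilinear R \<and>
     (\<forall>x y z w. R x y z w = - R y x z w) \<and>
     (\<forall>x y z w. R x y z w = - R x y w z) \<and>
     (\<forall>x y z w. R x y z w = R z w x y) \<and>
     (\<forall>x y z w. R x y z w + R y z x w + R z x y w = 0)"

definition orthonormal_basis_of :: "'a::euclidean_space set \<Rightarrow> nat \<Rightarrow> (nat \<Rightarrow> 'a) \<Rightarrow> bool" where
  "orthonormal_basis_of Vp r e \<longleftrightarrow> r = dim Vp \<and> (\<forall>i<r. e i \<in> Vp) \<and>
     (\<forall>i<r. \<forall>j<r. inner (e i) (e j) = (if i = j then 1 else 0))"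

text \<open>Curvature of the fibres via the Gauss-type relation given in the paper:
  R^{M1}(F1,F2,F3,F4) = R^{ker}(F1,F2,F3,F4) + g(T_{F1}F4, T_{F2}F3) - g(T_{F2}F4, T_{F1}F3).\<close>
definition Rker :: "('a::real_inner \<Rightarrow> 'a \<Rightarrow> 'a \<Rightarrow> 'a \<Rightarrow> real) \<Rightarrow> ('a \<Rightarrow> 'a \<Rightarrow> 'a)
                     \<Rightarrow> 'a \<Rightarrow> 'a \<Rightarrow> 'a \<Rightarrow> 'a \<Rightarrow> real" where
  "Rker R T x y z w = R x y z w - inner (T x w) (T y z) + inner (T y w) (T x z)"

definition mean_curv :: "('a::real_vector \<Rightarrow> 'a \<Rightarrow> 'a) \<Rightarrow> nat \<Rightarrow> (nat \<Rightarrow> 'a) \<Rightarrow> 'a" where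
  "mean_curv T r e = (1 / real r) *\<^sub>R (\<Sum>i<r. T (e i) (e i))"

definition tau_V :: "('a \<Rightarrow> 'a \<Rightarrow> 'a \<Rightarrow> 'a \<Rightarrow> real) \<Rightarrow> nat \<Rightarrow> (nat \<Rightarrow> 'a) \<Rightarrow> real" where
  "tau_V R r e = (1/2) * (\<Sum>i<r. \<Sum>j<r. R (e i) (e j) (e j) (e i))"

definition sup_K_V :: "('a::real_inner \<Rightarrow> 'a \<Rightarrow> 'a \<Rightarrow> 'a \<Rightarrow> real) \<Rightarrow> 'a set \<Rightarrow> real" where
  "sup_K_V R Vp = Sup {R u v v u | u v. u \<in> Vp \<and> v \<in> Vp \<and> norm u = 1 \<and> norm v = 1 \<and> inner u v = 0}"

definition delta_hat_V2 :: "('a::real_inner \<Rightarrow> 'a \<Rightarrow> 'a \<Rightarrow> 'a \<Rightarrow> real) \<Rightarrow> ('a \<Rightarrow> 'a \<Rightarrow> 'a)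
                             \<Rightarrow> 'a set \<Rightarrow> nat \<Rightarrow> (nat \<Rightarrow> 'a) \<Rightarrow> real" where
  "delta_hat_V2 R T Vp r e = tau_V (Rker R T) r e - sup_K_V (Rker R T) Vp"

end

theory Submission
  imports Defs
begin

definition onset :: "'a::real_inner set \<Rightarrow> bool" where
  "onset S \<longleftrightarrow> (\<forall>x\<in>S. \<forall>y\<in>S. inner x y = (if x = y then 1 else 0))"

lemma on_expand:
  fixes S :: "'a::euclidean_space set"
  assumes "finite S" "onset S" "x \<in> span S"
  shows "x = (\<Sum>b\<in>S. (x \<bullet> b) *\<^sub>R b)"
proof -
  obtain c where x: "x = (\<Sum>v\<in>S. c v *\<^sub>R v)"
    using assms(3) span_finite[OF assms(1)] by auto
  have "x \<bullet> b = c b" if "b \<in> S" for b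
  proof -
    have "x \<bullet> b = (\<Sum>v\<in>S. c v * (v \<bullet> b))" by (simp add: x inner_sum_left)
    also have "\<dots> = (\<Sum>v\<in>S. if v = b then c b else 0)"
      using assms(2) that unfolding onset_def by (intro sum.cong) auto
    also have "\<dots> = c b" using assms(1) that by simp
    finally show ?thesis .
  qed
  then show ?thesis by (subst x) (intro sum.cong, auto)
qed

lemma hs_inv:
  fixes E B :: "'a::euclidean_space set" and L :: "'a \<Rightarrow> 'b::real_inner"
  assumes "finite E" "finite B" "onset E" "onset B" "E \<subseteq> span B" "B \<subseteq> span E" "linear L"
  shows "(\<Sum>b\<in>B. L b \<bullet> L b) = (\<Sum>x\<in>E. L x \<bullet> L x)"
proof -
  have "(\<Sum>b\<in>B. L b \<bullet> L b) = (\<Sum>b\<in>B. L (\<Sum>x\<in>E. (b \<bullet> x) *\<^sub>R x) \<bullet> L b)"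
    using on_expand[OF assms(1,3)] assms(6) by (intro sum.cong) auto
  also have "\<dots> = (\<Sum>b\<in>B. \<Sum>x\<in>E. (x \<bullet> b) * (L x \<bullet> L b))"
  proof (intro sum.cong refl)
    fix b assume "b \<in> B"
    have "L (\<Sum>x\<in>E. (b \<bullet> x) *\<^sub>R x) = (\<Sum>x\<in>E. (b \<bullet> x) *\<^sub>R L x)"
      using assms(7) by (simp add: linear_sum linear_scale)
    then show "L (\<Sum>x\<in>E. (b \<bullet> x) *\<^sub>R x) \<bullet> L b = (\<Sum>x\<in>E. (x \<bullet> b) * (L x \<bullet> L b))"
      by (simp add: inner_sum_left inner_commute[of b])
  qed
  also have "\<dots> = (\<Sum>x\<in>E. \<Sum>b\<in>B. (x \<bullet> b) * (L x \<bullet> L b))"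
    by (rule sum.swap)
  also have "\<dots> = (\<Sum>x\<in>E. L x \<bullet> L (\<Sum>b\<in>B. (x \<bullet> b) *\<^sub>R b))"
    using assms(7) by (simp add: linear_sum linear_scale inner_sum_right)
  also have "\<dots> = (\<Sum>x\<in>E. L x \<bullet> L x)"
    using on_expand[OF assms(2,4)] assms(5) by (intro sum.cong) auto
  finally show ?thesis .
qed

lemma tr_inv:
  fixes E B :: "'a::euclidean_space set" and T :: "'a \<Rightarrow> 'a \<Rightarrow> 'b::real_vector"
  assumes "finite E" "finite B" "onset E" "onset B" "E \<subseteq> span B" "B \<subseteq> span E" "bilinear T"
  shows "(\<Sum>b\<in>B. T b b) = (\<Sum>x\<in>E. T x x)"
proof -
  have "(\<Sum>b\<in>B. T b b) = (\<Sum>b\<in>B. T (\<Sum>x\<in>E. (b \<bullet> x) *\<^sub>R x) b)"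
    using on_expand[OF assms(1,3)] assms(6) by (intro sum.cong) auto
  also have "\<dots> = (\<Sum>b\<in>B. \<Sum>x\<in>E. (x \<bullet> b) *\<^sub>R T x b)"
  proof (intro sum.cong refl)
    fix b assume "b \<in> B"
    have l: "linear (\<lambda>x. T x b)" using assms(7) by (simp add: bilinear_def)
    show "T (\<Sum>x\<in>E. (b \<bullet> x) *\<^sub>R x) b = (\<Sum>x\<in>E. (x \<bullet> b) *\<^sub>R T x b)"
      using linear_sum[OF l, of "\<lambda>x. (b \<bullet> x) *\<^sub>R x" E] linear_scale[OF l]
      by (simp add: inner_commute[of b])
  qed
  also have "\<dots> = (\<Sum>x\<in>E. \<Sum>b\<in>B. (x \<bullet> b) *\<^sub>R T x b)"
    by (rule sum.swap)
  also have "\<dots> = (\<Sum>x\<in>E. T x (\<Sum>b\<in>B. (x \<bullet> b) *\<^sub>R b))"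
    using assms(7) by (simp add: bilinear_def linear_sum linear_scale)
  also have "\<dots> = (\<Sum>x\<in>E. T x x)"
    using on_expand[OF assms(2,4)] assms(5) by (intro sum.cong) auto
  finally show ?thesis .
qed

lemma hs2_inv:
  fixes E B :: "'a::euclidean_space set" and T :: "'a \<Rightarrow> 'a \<Rightarrow> 'b::real_inner"
  assumes "finite E" "finite B" "onset E" "onset B" "E \<subseteq> span B" "B \<subseteq> span E" "bilinear T"
  shows "(\<Sum>a\<in>B. \<Sum>b\<in>B. T a b \<bullet> T a b) = (\<Sum>x\<in>E. \<Sum>y\<in>E. T x y \<bullet> T x y)"
proof -
  have "(\<Sum>a\<in>B. \<Sum>b\<in>B. T a b \<bullet> T a b) = (\<Sum>a\<in>B. \<Sum>y\<in>E. T a y \<bullet> T a y)"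
    using assms by (intro sum.cong refl hs_inv) (auto simp: bilinear_def)
  also have "\<dots> = (\<Sum>y\<in>E. \<Sum>a\<in>B. T a y \<bullet> T a y)" by (rule sum.swap)
  also have "\<dots> = (\<Sum>y\<in>E. \<Sum>x\<in>E. T x y \<bullet> T x y)"
    using assms by (intro sum.cong refl hs_inv[where L="\<lambda>a. T a _"]) (auto simp: bilinear_def)
  also have "\<dots> = (\<Sum>x\<in>E. \<Sum>y\<in>E. T x y \<bullet> T x y)" by (rule sum.swap)
  finally show ?thesis .
qed

lemma lin_bound:
  fixes f :: "'a::euclidean_space \<Rightarrow> real"
  assumes "linear f" "norm u \<le> 1"
  shows "\<bar>f u\<bar> \<le> (\<Sum>b\<in>Basis. \<bar>f b\<bar>)"
proof -
  have "f u = (\<Sum>b\<in>Basis. (u \<bullet> b) * f b)"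
    using assms(1) by (subst euclidean_representation[symmetric, of u]) (simp add: linear_sum linear_scale)
  also have "\<bar>\<dots>\<bar> \<le> (\<Sum>b\<in>Basis. \<bar>(u \<bullet> b) * f b\<bar>)" by (rule sum_abs)
  also have "\<dots> \<le> (\<Sum>b\<in>Basis. \<bar>f b\<bar>)"
  proof (rule sum_mono)
    fix b :: 'a assume "b \<in> Basis"
    then have "\<bar>u \<bullet> b\<bar> \<le> 1" using Basis_le_norm[of b u] assms(2) by simp
    then show "\<bar>(u \<bullet> b) * f b\<bar> \<le> \<bar>f b\<bar>"
      by (simp add: abs_mult mult_left_le_one_le)
  qed
  finally show ?thesis .
qed

lemma onset_indep:
  fixes S :: "'a::euclidean_space set"
  assumes "onset S" shows "independent S"
proof (rule pairwise_orthogonal_independent)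
  show "pairwise orthogonal S" using assms by (auto simp: onset_def pairwise_def orthogonal_def)
  show "0 \<notin> S" using assms unfolding onset_def by (metis inner_zero_left zero_neq_one)
qed


lemma key_ineq:
  fixes T :: "'a::euclidean_space \<Rightarrow> 'a \<Rightarrow> 'a" and B' :: "'a set"
  assumes fin: "finite B'" and uB: "u \<notin> B'" and vB: "v \<notin> B'" and uv: "u \<noteq> v"
    and sym: "T v u = T u v" and card: "real (card B') \<le> real r - 2" and r: "r > 2"
  shows "T u v \<bullet> T u v - T u u \<bullet> T v v
     \<le> (\<Sum>x\<in>insert u (insert v B'). \<Sum>y\<in>insert u (insert v B'). T x y \<bullet> T x y) / 2
       - (\<Sum>x\<in>insert u (insert v B'). T x x) \<bullet> (\<Sum>x\<in>insert u (insert v B'). T x x) / (2 * (real r - 1))"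
proof -
  define B where "B = insert u (insert v B')"
  have finB: "finite B" using fin by (simp add: B_def)
  define Y where "Y = (\<Sum>x\<in>B'. T x x \<bullet> T x x)"
  define X where "X = (\<Sum>x\<in>B'. T x x)"
  define SB where "SB = (\<Sum>x\<in>B. \<Sum>y\<in>B. T x y \<bullet> T x y)"
  define AB where "AB = (\<Sum>x\<in>B. T x x)"
  have AB: "AB = T u u + T v v + X"
    using fin uB vB uv by (simp add: AB_def B_def X_def)
  have fu: "(\<Sum>y\<in>B. T u y \<bullet> T u y) \<ge> T u u \<bullet> T u u + T u v \<bullet> T u v"
    using fin uB vB uv by (simp add: B_def sum_nonneg)
  have fv: "(\<Sum>y\<in>B. T v y \<bullet> T v y) \<ge> T u v \<bullet> T u v + T v v \<bullet> T v v"
    using fin uB vB uv sym by (simp add: B_def sum_nonneg)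
  have fx: "(\<Sum>y\<in>B. T x y \<bullet> T x y) \<ge> T x x \<bullet> T x x" if "x \<in> B'" for x
    using that finB by (intro member_le_sum) (auto simp: B_def)
  have "SB = (\<Sum>y\<in>B. T u y \<bullet> T u y) + (\<Sum>y\<in>B. T v y \<bullet> T v y) + (\<Sum>x\<in>B'. \<Sum>y\<in>B. T x y \<bullet> T x y)"
    using fin uB vB uv by (simp add: SB_def B_def)
  moreover have "(\<Sum>x\<in>B'. \<Sum>y\<in>B. T x y \<bullet> T x y) \<ge> Y"
    unfolding Y_def using fx by (intro sum_mono) auto
  ultimately have SBge: "SB \<ge> T u u \<bullet> T u u + T v v \<bullet> T v v + 2 * (T u v \<bullet> T u v) + Y"
    using fu fv by linarith
  define s where "s = norm (T u u + T v v)"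
  define t where "t = norm X"
  have s2: "s^2 = T u u \<bullet> T u u + T v v \<bullet> T v v + 2 * (T u u \<bullet> T v v)"
    by (simp add: s_def power2_norm_eq_inner inner_add_left inner_add_right inner_commute)
  have "t \<le> (\<Sum>x\<in>B'. norm (T x x))" unfolding t_def X_def by (rule norm_sum)
  moreover have "t \<ge> 0" by (simp add: t_def)
  ultimately have "t^2 \<le> (\<Sum>x\<in>B'. norm (T x x))^2" by (simp add: power_mono)
  also have "\<dots> \<le> (\<Sum>x\<in>B'. (norm (T x x))^2) * card B'" by (rule sum_squared_le_sum_of_squares)
  also have "(\<Sum>x\<in>B'. (norm (T x x))^2) = Y" by (simp add: Y_def power2_norm_eq_inner)
  finally have t2: "t^2 \<le> Y * card B'" .
  have Y0: "Y \<ge> 0" by (simp add: Y_def sum_nonneg)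
  define k where "k = real r - 2"
  have k0: "k > 0" using r by (simp add: k_def)
  have t2k: "t^2 \<le> k * Y" using t2 card Y0 k_def
    by (metis mult.commute mult_left_mono order_trans)
  have nAB: "norm AB \<le> s + t" unfolding AB s_def t_def by (rule norm_triangle_ineq)
  have "AB \<bullet> AB = (norm AB)^2" by (simp add: power2_norm_eq_inner)
  also have "\<dots> \<le> (s + t)^2" using nAB by (simp add: power_mono)
  also have "\<dots> \<le> (k + 1) * (s^2 + Y)"
  proof -
    have "k * ((k + 1) * (s^2 + Y) - (s + t)^2) \<ge> (k * s - t)^2"
    proof -
      have "k * ((k + 1) * (s^2 + Y) - (s + t)^2) - (k * s - t)^2 = (k + 1) * (k * Y - t^2)"
        by (simp add: algebra_simps power2_eq_square)
      moreover have "(k + 1) * (k * Y - t^2) \<ge> 0" using k0 t2k by simp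
      ultimately show ?thesis by linarith
    qed
    then have "k * ((k + 1) * (s^2 + Y) - (s + t)^2) \<ge> 0" by (meson order_trans zero_le_power2)
    then show ?thesis using k0 by (simp add: zero_le_mult_iff)
  qed
  finally have main: "AB \<bullet> AB \<le> (real r - 1) * (s^2 + Y)" by (simp add: k_def)
  have rr: "real r - 1 > 0" using r by simp
  have q: "AB \<bullet> AB / (2 * (real r - 1)) \<le> (s^2 + Y) / 2"
    using main rr by (simp add: field_simps)
  have "T u v \<bullet> T u v - T u u \<bullet> T v v \<le> SB / 2 - (s^2 + Y) / 2"
    using SBge s2 by (simp add: field_simps)
  then have "T u v \<bullet> T u v - T u u \<bullet> T v v \<le> SB / 2 - AB \<bullet> AB / (2 * (real r - 1))"
    using q by linarith
  then show ?thesis unfolding SB_def AB_def B_def .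
qed


lemma R_bound:
  fixes R :: "'a::euclidean_space \<Rightarrow> 'a \<Rightarrow> 'a \<Rightarrow> 'a \<Rightarrow> real"
  assumes q: "quadrilinear R" and nu: "norm u \<le> 1" and nv: "norm v \<le> 1"
  shows "\<bar>R u v v u\<bar> \<le> (\<Sum>b1\<in>Basis. \<Sum>b2\<in>Basis. \<Sum>b3\<in>Basis. \<Sum>b4\<in>Basis. \<bar>R b1 b2 b3 b4\<bar>)"
proof -
  have l1: "linear (\<lambda>x. R x y z w)" and l2: "linear (\<lambda>x. R y x z w)"
    and l3: "linear (\<lambda>x. R y z x w)" and l4: "linear (\<lambda>x. R y z w x)" for x y z w
    using q unfolding quadrilinear_def by auto
  have "\<bar>R u v v u\<bar> \<le> (\<Sum>b1\<in>Basis. \<bar>R b1 v v u\<bar>)" by (rule lin_bound[OF l1 nu])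
  also have "\<dots> \<le> (\<Sum>b1\<in>Basis. \<Sum>b2\<in>Basis. \<bar>R b1 b2 v u\<bar>)"
    by (intro sum_mono lin_bound[OF l2 nv])
  also have "\<dots> \<le> (\<Sum>b1\<in>Basis. \<Sum>b2\<in>Basis. \<Sum>b3\<in>Basis. \<bar>R b1 b2 b3 u\<bar>)"
    by (intro sum_mono lin_bound[OF l3 nv])
  also have "\<dots> \<le> (\<Sum>b1\<in>Basis. \<Sum>b2\<in>Basis. \<Sum>b3\<in>Basis. \<Sum>b4\<in>Basis. \<bar>R b1 b2 b3 b4\<bar>)"
    by (intro sum_mono lin_bound[OF l4 nu])
  finally show ?thesis .
qed

theorem mainTheorem2:
  fixes Vp :: "'a::euclidean_space set"
    and T :: "'a \<Rightarrow> 'a \<Rightarrow> 'a"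
    and R :: "'a \<Rightarrow> 'a \<Rightarrow> 'a \<Rightarrow> 'a \<Rightarrow> real"
    and e :: "nat \<Rightarrow> 'a"
    and r :: nat
  assumes "subspace Vp"
    and "orthonormal_basis_of Vp r e"
    and "r > 2"
    and "bilinear T"
    and "\<forall>u\<in>Vp. \<forall>v\<in>Vp. \<forall>w\<in>Vp. inner (T u v) w = 0"
    and "\<forall>u\<in>Vp. \<forall>v\<in>Vp. T u v = T v u"
    and "curvature_like R"
  shows "delta_hat_V2 R T Vp r e
           \<ge> tau_V R r e - sup_K_V R Vp
              - (real r ^ 2 * (real r - 2)) / (2 * (real r - 1)) * (norm (mean_curv T r e))\<^sup>2"
proof -
  have rdim: "r = dim Vp" and eV: "\<And>i. i < r \<Longrightarrow> e i \<in> Vp"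
    and eon: "\<And>i j. i < r \<Longrightarrow> j < r \<Longrightarrow> e i \<bullet> e j = (if i = j then 1 else 0)"
    using assms(2) unfolding orthonormal_basis_of_def by auto
  have sub: "subspace Vp" by fact
  have bil: "bilinear T" by fact
  have symT: "\<And>u v. u \<in> Vp \<Longrightarrow> v \<in> Vp \<Longrightarrow> T v u = T u v" using assms(6) by metis
  have quad: "quadrilinear R" using assms(7) by (simp add: curvature_like_def)
  have r2: "r > 2" by fact
  define E where "E = e ` {..<r}"
  have inj: "inj_on e {..<r}"
  proof (rule inj_onI)
    fix i j assume ij: "i \<in> {..<r}" "j \<in> {..<r}" "e i = e j"
    show "i = j"
    proof (rule ccontr)
      assume "i \<noteq> j"
      then have "e i \<bullet> e j = 0" using eon[of i j] ij(1,2) by simp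
      moreover have "e i \<bullet> e i = 1" using eon[of i i] ij(1) by simp
      ultimately show False using ij by simp
    qed
  qed
  have finE: "finite E" by (simp add: E_def)
  have onE: "onset E"
    unfolding onset_def E_def using eon inj by (auto simp: inj_on_eq_iff)
  have cardE: "card E = r" using inj by (simp add: E_def card_image)
  have EV: "E \<subseteq> Vp" using eV by (auto simp: E_def)
  have VE: "Vp \<subseteq> span E"
    using card_eq_dim[OF EV] cardE rdim finE onset_indep[OF onE] by simp
  define A where "A = (\<Sum>i<r. T (e i) (e i))"
  define S where "S = (\<Sum>i<r. \<Sum>j<r. T (e i) (e j) \<bullet> T (e i) (e j))"
  have AE: "A = (\<Sum>x\<in>E. T x x)" by (simp add: A_def E_def sum.reindex[OF inj])
  have SE: "S = (\<Sum>x\<in>E. \<Sum>y\<in>E. T x y \<bullet> T x y)" by (simp add: S_def E_def sum.reindex[OF inj])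
  define K0 where "K0 = (\<Sum>b1\<in>Basis. \<Sum>b2\<in>Basis. \<Sum>b3\<in>Basis. \<Sum>b4\<in>Basis. \<bar>R b1 b2 b3 b4\<bar>)"
  define KR where "KR = {R u v v u | u v. u \<in> Vp \<and> v \<in> Vp \<and> norm u = 1 \<and> norm v = 1 \<and> inner u v = 0}"
  have bdd: "bdd_above KR"
    unfolding KR_def bdd_above_def
    using R_bound[OF quad] by (intro exI[of _ K0]) (force simp: K0_def abs_le_iff)
  have supKR: "sup_K_V R Vp = Sup KR" by (simp add: sup_K_V_def KR_def)
  define C where "C = S / 2 - A \<bullet> A / (2 * (real r - 1))"
  have point: "Rker R T u v v u \<le> Sup KR + C"
    if uV: "u \<in> Vp" and vV: "v \<in> Vp" and nu: "norm u = 1" and nv: "norm v = 1" and uv: "u \<bullet> v = 0" for u v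
  proof -
    have uu: "u \<bullet> u = 1" using nu by (simp add: norm_eq_1)
    have vv: "v \<bullet> v = 1" using nv by (simp add: norm_eq_1)
    have vu: "v \<bullet> u = 0" using uv by (simp add: inner_commute)
    have uneqv: "u \<noteq> v" using uu uv by auto
    define W where "W = {x \<in> Vp. x \<bullet> u = 0 \<and> x \<bullet> v = 0}"
    have subW: "subspace W"
      using sub unfolding subspace_def W_def by (auto simp: inner_add_left)
    obtain B' where B'W: "B' \<subseteq> W" and B'o: "pairwise orthogonal B'"
      and B'n: "\<And>x. x \<in> B' \<Longrightarrow> norm x = 1" and B'i: "independent B'" and B's: "span B' = W"
      using orthonormal_basis_subspace[OF subW] by metis
    have finB': "finite B'" using B'i by (metis independent_imp_finite)
    have uB: "u \<notin> B'" using B'W uu by (auto simp: W_def)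
    have vB: "v \<notin> B'" using B'W vv by (auto simp: W_def)
    define B where "B = insert u (insert v B')"
    have finB: "finite B" using finB' by (simp add: B_def)
    have onB': "x \<bullet> y = (if x = y then 1 else 0)" if "x \<in> B'" "y \<in> B'" for x y
      using that B'o B'n by (auto simp: pairwise_def orthogonal_def norm_eq_1)
    have onB: "onset B"
      unfolding onset_def B_def
      using onB' B'W uu vv uv vu uneqv uB vB by (auto simp: W_def inner_commute)
    have BV: "B \<subseteq> Vp" using B'W uV vV by (auto simp: B_def W_def)
    have VB: "Vp \<subseteq> span B"
    proof
      fix x assume xV: "x \<in> Vp"
      define w where "w = x - (x \<bullet> u) *\<^sub>R u - (x \<bullet> v) *\<^sub>R v"
      have "w \<in> Vp" unfolding w_def using sub xV uV vV
        by (intro subspace_diff subspace_mul) auto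
      moreover have "w \<bullet> u = 0" "w \<bullet> v = 0"
        by (simp_all add: w_def inner_diff_left uu vv uv vu)
      ultimately have "w \<in> W" by (simp add: W_def)
      then have "w \<in> span B" using B's span_mono[of B' B] by (auto simp: B_def)
      moreover have "u \<in> span B" "v \<in> span B" by (auto simp: B_def intro: span_base)
      ultimately have "w + (x \<bullet> u) *\<^sub>R u + (x \<bullet> v) *\<^sub>R v \<in> span B"
        by (intro span_add span_mul) auto
      then show "x \<in> span B" by (simp add: w_def)
    qed
    have "card B \<le> dim Vp" by (rule independent_card_le_dim[OF BV onset_indep[OF onB]])
    moreover have "card B = card B' + 2" using finB' uB vB uneqv by (simp add: B_def)
    ultimately have cB': "real (card B') \<le> real r - 2" using rdim by simp
    have key: "T u v \<bullet> T u v - T u u \<bullet> T v v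
       \<le> (\<Sum>x\<in>B. \<Sum>y\<in>B. T x y \<bullet> T x y) / 2 - (\<Sum>x\<in>B. T x x) \<bullet> (\<Sum>x\<in>B. T x x) / (2 * (real r - 1))"
      unfolding B_def by (rule key_ineq[OF finB' uB vB uneqv symT[OF uV vV] cB' r2])
    have EB: "E \<subseteq> span B" using EV VB by auto
    have BE: "B \<subseteq> span E" using BV VE by auto
    have "(\<Sum>x\<in>B. \<Sum>y\<in>B. T x y \<bullet> T x y) = S"
      unfolding SE by (rule hs2_inv[OF finE finB onE onB EB BE bil])
    moreover have "(\<Sum>x\<in>B. T x x) = A"
      unfolding AE by (rule tr_inv[OF finE finB onE onB EB BE bil])
    ultimately have key2: "T u v \<bullet> T u v - T u u \<bullet> T v v \<le> C"
      using key by (simp add: C_def)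
    have "R u v v u \<in> KR" unfolding KR_def using uV vV nu nv uv by blast
    then have "R u v v u \<le> Sup KR" using bdd by (rule cSup_upper)
    moreover have "Rker R T u v v u = R u v v u - T u u \<bullet> T v v + T u v \<bullet> T u v"
      by (simp add: Rker_def symT[OF uV vV])
    ultimately show ?thesis using key2 by linarith
  qed
  have e0: "e 0 \<in> Vp" "norm (e 0) = 1" and e1: "e 1 \<in> Vp" "norm (e 1) = 1" and e01: "e 0 \<bullet> e 1 = 0"
    using eV eon r2 by (auto simp: norm_eq_1)
  have supRk: "sup_K_V (Rker R T) Vp \<le> Sup KR + C"
    unfolding sup_K_V_def
  proof (rule cSup_least)
    show "{Rker R T u v v u |u v. u \<in> Vp \<and> v \<in> Vp \<and> norm u = 1 \<and> norm v = 1 \<and> u \<bullet> v = 0} \<noteq> {}"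
      using e0 e1 e01 by blast
  next
    fix x assume "x \<in> {Rker R T u v v u |u v. u \<in> Vp \<and> v \<in> Vp \<and> norm u = 1 \<and> norm v = 1 \<and> u \<bullet> v = 0}"
    then show "x \<le> Sup KR + C" using point by blast
  qed
  have tau: "tau_V (Rker R T) r e = tau_V R r e - A \<bullet> A / 2 + S / 2"
  proof -
    have "tau_V (Rker R T) r e = (1/2) * (\<Sum>i<r. \<Sum>j<r. R (e i) (e j) (e j) (e i)
        - T (e i) (e i) \<bullet> T (e j) (e j) + T (e i) (e j) \<bullet> T (e i) (e j))"
      unfolding tau_V_def Rker_def using symT eV by (intro arg_cong[where f="\<lambda>x. (1/2) * x"] sum.cong refl) auto
    also have "\<dots> = (1/2) * ((\<Sum>i<r. \<Sum>j<r. R (e i) (e j) (e j) (e i))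
        - (\<Sum>i<r. \<Sum>j<r. T (e i) (e i) \<bullet> T (e j) (e j)) + S)"
      by (simp add: S_def sum_subtractf sum.distrib)
    also have "(\<Sum>i<r. \<Sum>j<r. T (e i) (e i) \<bullet> T (e j) (e j)) = A \<bullet> A"
      by (simp only: A_def inner_sum_left inner_sum_right) (rule sum.swap)
    finally show ?thesis by (simp add: tau_V_def algebra_simps)
  qed
  have H: "(norm (mean_curv T r e))\<^sup>2 = A \<bullet> A / (real r)^2"
    by (simp add: mean_curv_def A_def power2_norm_eq_inner[symmetric] power_divide)
  have rpos: "real r > 2" using r2 by simp
  have "(real r ^ 2 * (real r - 2)) / (2 * (real r - 1)) * (A \<bullet> A / (real r)^2)
        = A \<bullet> A / 2 - A \<bullet> A / (2 * (real r - 1))"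
    using rpos by (simp add: field_simps power2_eq_square)
  then show ?thesis
    unfolding delta_hat_V2_def tau H supKR[symmetric]
    using supRk by (simp add: C_def supKR)
qed

end
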